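(* Let $\Gamma$ be a Veldkamp $n$-gon ($n\ge 2$). Then for every two edges $e_1,e_2$ of $\Gamma$ there exists an edge of $\Gamma$ that is opposite both $e_1$ and $e_2$. Consequently, for any two vertices $u,v$ with ${\rm dist}(u,v)$ even, $u^{\rm op}\cap v^{\rm op}\neq\emptyset$.
   Context: A graph is a pair $(V,E)$ with $E$ a set of $2$-element subsets of $V$; $\Gamma_v$ is the set of neighbors of $v$. An $s$-path is a sequence $(x_0,\dots,x_s)$ of vertices with consecutive vertices adjacent and $x_{i-2}\ne x_i$ for $i\in[2,s]$; ${\rm dist}$ is graph distance. A closed $s$-path is an $s$-path with $s\ge3$ whose first and last vertices coincide; an $s$-circuit is the subgraph determined by a closed $s$-path. An opposition relation on a set $X$ is a symmetric anti-reflexive relation; it is $k$-plump if for every $S\subseteq X$ with $|S|\le k$ some element of $X$ is related to all elements of $S$. A Veldkamp graph is a graph with a $2$-plump opposition relation $\equiv_v$ on $\Gamma_v$ for each vertex $v$. A path $(v_0,\dots,v_s)$ is straight if $v_{i-1}\equiv_{v_i}v_{i+1}$ for all $i\in[1,s-1]$; a circuit is straight if every path in it is straight. A Veldkamp $n$-gon ($n\ge2$) is a Veldkamp graph satisfying (VP1) connected and bipartite; (VP2) for each $k\in[1,n-1]$ each straight $k$-path is the unique straight path between its endpoints of length at most $k$; (VP3) every straight $(n+1)$-path lies in a straight $2n$-circuit. A root is a straight $n$-path. Two vertices $x,y$ are opposite if there is a root from $x$ to $y$; $x^{\rm op}$ denotes the set of vertices opposite $x$. Two edges $e,f$ are opposite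 if there is a straight $(n+1)$-path whose first edge is $e$ and whose last edge is $f$. *)

theory Defs
  imports Main
begin

text \<open>For each vertex v, opp v is the opposition relation on the neighbourhood of v
(opp v x y means x is opposite y at v).\<close>

definition graph :: "'a set \<Rightarrow> ('a \<Rightarrow> 'a \<Rightarrow> bool) \<Rightarrow> bool" where
  "graph V adj \<longleftrightarrow> (\<forall>x y. adj x y \<longrightarrow> x \<in> V \<and> y \<in> V \<and> x \<noteq> y \<and> adj y x)"

definition nbrs :: "('a \<Rightarrow> 'a \<Rightarrow> bool) \<Rightarrow> 'a \<Rightarrow> 'a set" where
  "nbrs adj v = {x. adj v x}"

definition graph_edges :: "('a \<Rightarrow> 'a \<Rightarrow> bool) \<Rightarrow> 'a set set" where
  "graph_edges adj = {{x, y} | x y. adj x y}"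

definition opposition_rel :: "'a set \<Rightarrow> ('a \<Rightarrow> 'a \<Rightarrow> bool) \<Rightarrow> bool" where
  "opposition_rel X R \<longleftrightarrow> (\<forall>x y. R x y \<longrightarrow> x \<in> X \<and> y \<in> X \<and> R y x) \<and> (\<forall>x. \<not> R x x)"

definition plump :: "nat \<Rightarrow> 'a set \<Rightarrow> ('a \<Rightarrow> 'a \<Rightarrow> bool) \<Rightarrow> bool" where
  "plump k X R \<longleftrightarrow> (\<forall>S. S \<subseteq> X \<and> finite S \<and> card S \<le> k \<longrightarrow> (\<exists>x\<in>X. \<forall>y\<in>S. R x y))"

definition veldkamp_graph :: "'a set \<Rightarrow> ('a \<Rightarrow> 'a \<Rightarrow> bool) \<Rightarrow> ('a \<Rightarrow> 'a \<Rightarrow> 'a \<Rightarrow> bool) \<Rightarrow> bool" where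
  "veldkamp_graph V adj opp \<longleftrightarrow> graph V adj \<and>
     (\<forall>v\<in>V. opposition_rel (nbrs adj v) (opp v) \<and> plump 2 (nbrs adj v) (opp v))"

definition is_path :: "'a set \<Rightarrow> ('a \<Rightarrow> 'a \<Rightarrow> bool) \<Rightarrow> 'a list \<Rightarrow> nat \<Rightarrow> bool" where
  "is_path V adj xs s \<longleftrightarrow> length xs = Suc s \<and> set xs \<subseteq> V \<and>
     (\<forall>i<s. adj (xs ! i) (xs ! Suc i)) \<and>
     (\<forall>i. 2 \<le> i \<and> i \<le> s \<longrightarrow> xs ! (i - 2) \<noteq> xs ! i)"

definition straight :: "('a \<Rightarrow> 'a \<Rightarrow> 'a \<Rightarrow> bool) \<Rightarrow> 'a list \<Rightarrow> bool" where
  "straight opp xs \<longleftrightarrow> (\<forall>i. 1 \<le> i \<and> Suc i < length xs \<longrightarrow> opp (xs ! i) (xs ! (i - 1)) (xs ! Suc i))"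

definition closed_path :: "'a set \<Rightarrow> ('a \<Rightarrow> 'a \<Rightarrow> bool) \<Rightarrow> 'a list \<Rightarrow> nat \<Rightarrow> bool" where
  "closed_path V adj xs s \<longleftrightarrow> is_path V adj xs s \<and> 3 \<le> s \<and> xs ! 0 = xs ! s"

definition circ_edges :: "'a list \<Rightarrow> 'a set set" where
  "circ_edges c = {{c ! i, c ! Suc i} | i. Suc i < length c}"

definition path_in_circuit :: "'a list \<Rightarrow> 'a list \<Rightarrow> bool" where
  "path_in_circuit c p \<longleftrightarrow> set p \<subseteq> set c \<and> (\<forall>i. Suc i < length p \<longrightarrow> {p ! i, p ! Suc i} \<in> circ_edges c)"

definition straight_circuit :: "'a set \<Rightarrow> ('a \<Rightarrow> 'a \<Rightarrow> bool) \<Rightarrow> ('a \<Rightarrow> 'a \<Rightarrow> 'a \<Rightarrow> bool) \<Rightarrow> 'a list \<Rightarrow> bool" where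
  "straight_circuit V adj opp c \<longleftrightarrow>
     (\<forall>p s. is_path V adj p s \<and> path_in_circuit c p \<longrightarrow> straight opp p)"

definition walk :: "'a set \<Rightarrow> ('a \<Rightarrow> 'a \<Rightarrow> bool) \<Rightarrow> 'a list \<Rightarrow> bool" where
  "walk V adj xs \<longleftrightarrow> xs \<noteq> [] \<and> set xs \<subseteq> V \<and> (\<forall>i. Suc i < length xs \<longrightarrow> adj (xs ! i) (xs ! Suc i))"

definition connected_graph :: "'a set \<Rightarrow> ('a \<Rightarrow> 'a \<Rightarrow> bool) \<Rightarrow> bool" where
  "connected_graph V adj \<longleftrightarrow> (\<forall>u\<in>V. \<forall>v\<in>V. \<exists>xs. walk V adj xs \<and> hd xs = u \<and> last xs = v)"

definition bipartite_graph :: "'a set \<Rightarrow> ('a \<Rightarrow> 'a \<Rightarrow> bool) \<Rightarrow> bool" where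
  "bipartite_graph V adj \<longleftrightarrow> (\<exists>c :: 'a \<Rightarrow> bool. \<forall>x y. adj x y \<longrightarrow> c x \<noteq> c y)"

definition gdist :: "'a set \<Rightarrow> ('a \<Rightarrow> 'a \<Rightarrow> bool) \<Rightarrow> 'a \<Rightarrow> 'a \<Rightarrow> nat" where
  "gdist V adj u v = (LEAST k. \<exists>xs. walk V adj xs \<and> length xs = Suc k \<and> hd xs = u \<and> last xs = v)"

definition veldkamp_ngon :: "'a set \<Rightarrow> ('a \<Rightarrow> 'a \<Rightarrow> bool) \<Rightarrow> ('a \<Rightarrow> 'a \<Rightarrow> 'a \<Rightarrow> bool) \<Rightarrow> nat \<Rightarrow> bool" where
  "veldkamp_ngon V adj opp n \<longleftrightarrow> 2 \<le> n \<and> veldkamp_graph V adj opp \<and>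
     \<comment> \<open>VP1\<close>
     connected_graph V adj \<and> bipartite_graph V adj \<and>
     \<comment> \<open>VP2\<close>
     (\<forall>k. 1 \<le> k \<and> k \<le> n - 1 \<longrightarrow> (\<forall>p. is_path V adj p k \<and> straight opp p \<longrightarrow>
        (\<forall>q j. is_path V adj q j \<and> j \<le> k \<and> straight opp q \<and> hd q = hd p \<and> last q = last p \<longrightarrow> q = p))) \<and>
     \<comment> \<open>VP3\<close>
     (\<forall>p. is_path V adj p (n + 1) \<and> straight opp p \<longrightarrow>
        (\<exists>c. closed_path V adj c (2 * n) \<and> straight_circuit V adj opp c \<and> path_in_circuit c p))"

definition root :: "'a set \<Rightarrow> ('a \<Rightarrow> 'a \<Rightarrow> bool) \<Rightarrow> ('a \<Rightarrow> 'a \<Rightarrow> 'a \<Rightarrow> bool) \<Rightarrow> nat \<Rightarrow> 'a list \<Rightarrow> bool" where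
  "root V adj opp n p \<longleftrightarrow> is_path V adj p n \<and> straight opp p"

definition op_set :: "'a set \<Rightarrow> ('a \<Rightarrow> 'a \<Rightarrow> bool) \<Rightarrow> ('a \<Rightarrow> 'a \<Rightarrow> 'a \<Rightarrow> bool) \<Rightarrow> nat \<Rightarrow> 'a \<Rightarrow> 'a set" where
  "op_set V adj opp n x = {y. \<exists>p. root V adj opp n p \<and> hd p = x \<and> last p = y}"

definition opposite_edges :: "'a set \<Rightarrow> ('a \<Rightarrow> 'a \<Rightarrow> bool) \<Rightarrow> ('a \<Rightarrow> 'a \<Rightarrow> 'a \<Rightarrow> bool) \<Rightarrow> nat \<Rightarrow> 'a set \<Rightarrow> 'a set \<Rightarrow> bool" where
  "opposite_edges V adj opp n e f \<longleftrightarrow> (\<exists>p. is_path V adj p (n + 1) \<and> straight opp p \<and>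
      {p ! 0, p ! 1} = e \<and> {p ! n, p ! Suc n} = f)"

end

theory Submission imports Defs begin

lemma is_path_adj: "is_path V adj P k \<Longrightarrow> i < k \<Longrightarrow> adj (P!i) (P!Suc i)"
  by (simp add: is_path_def)
lemma is_path_len: "is_path V adj P k \<Longrightarrow> length P = Suc k"
  by (simp add: is_path_def)
lemma is_path_V: "is_path V adj P k \<Longrightarrow> i \<le> k \<Longrightarrow> P!i \<in> V"
  unfolding is_path_def by (metis less_Suc_eq_le nth_mem subsetD)
lemma is_path_nb: "is_path V adj P k \<Longrightarrow> 2 \<le> i \<Longrightarrow> i \<le> k \<Longrightarrow> P!(i-2) \<noteq> P!i"
  by (simp add: is_path_def)
lemma straightD: "straight opp P \<Longrightarrow> 1 \<le> i \<Longrightarrow> Suc i < length P \<Longrightarrow> opp (P!i) (P!(i-1)) (P!Suc i)"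
  by (simp add: straight_def)

lemma is_path_app:
  assumes "is_path V adj P k" "adj (P!k) y" "y \<in> V" "1 \<le> k \<longrightarrow> P!(k-1) \<noteq> y"
  shows "is_path V adj (P@[y]) (Suc k)"
proof -
  have L: "length P = Suc k" using assms(1) by (simp add: is_path_def)
  show ?thesis unfolding is_path_def
  proof (intro conjI allI impI)
    show "length (P @ [y]) = Suc (Suc k)" using L by simp
    show "set (P @ [y]) \<subseteq> V" using assms(1,3) by (auto simp: is_path_def)
  next
    fix i assume "i < Suc k"
    then show "adj ((P @ [y]) ! i) ((P @ [y]) ! Suc i)"
    proof (cases "i < k")
      case True then show ?thesis using assms(1) L by (auto simp: nth_append is_path_def)
    next
      case False then have "i = k" using \<open>i < Suc k\<close> by simp
      then show ?thesis using assms(2) L by (auto simp: nth_append)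
    qed
  next
    fix i assume "2 \<le> i \<and> i \<le> Suc k"
    then show "(P @ [y]) ! (i - 2) \<noteq> (P @ [y]) ! i"
    proof (cases "i \<le> k")
      case True then show ?thesis using assms(1) L \<open>2 \<le> i \<and> i \<le> Suc k\<close> by (auto simp: nth_append is_path_def)
    next
      case False then have "i = Suc k" using \<open>2 \<le> i \<and> i \<le> Suc k\<close> by simp
      then show ?thesis using assms(4) L \<open>2 \<le> i \<and> i \<le> Suc k\<close> by (auto simp: nth_append)
    qed
  qed
qed

lemma straight_app:
  assumes "straight opp P" "length P = Suc k" "1 \<le> k \<longrightarrow> opp (P!k) (P!(k-1)) y"
  shows "straight opp (P@[y])"
  unfolding straight_def
proof (intro allI impI)
  fix i assume i: "1 \<le> i \<and> Suc i < length (P @ [y])"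
  show "opp ((P @ [y]) ! i) ((P @ [y]) ! (i - 1)) ((P @ [y]) ! Suc i)"
  proof (cases "Suc i < length P")
    case True then show ?thesis using i assms(1) by (simp add: nth_append straight_def less_imp_diff_less)
  next
    case False
    then have "i = k" using i assms(2) by simp
    then show ?thesis using i assms by (auto simp add: nth_append)
  qed
qed

lemma is_path_cons:
  assumes "is_path V adj P k" "adj v (P!0)" "v \<in> V" "1 \<le> k \<longrightarrow> v \<noteq> P!1"
  shows "is_path V adj (v#P) (Suc k)"
proof -
  have L: "length P = Suc k" using assms(1) by (simp add: is_path_def)
  show ?thesis unfolding is_path_def
  proof (intro conjI allI impI)
    show "length (v#P) = Suc (Suc k)" using L by simp
    show "set (v#P) \<subseteq> V" using assms(1,3) by (auto simp: is_path_def)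
  next
    fix i assume "i < Suc k"
    then show "adj ((v#P) ! i) ((v#P) ! Suc i)"
      using assms(1,2) L by (cases i) (auto simp: is_path_def)
  next
    fix i assume i: "2 \<le> i \<and> i \<le> Suc k"
    show "(v#P) ! (i - 2) \<noteq> (v#P) ! i"
    proof (cases "i = 2")
      case True then show ?thesis using assms(4) i by (simp add: numeral_2_eq_2)
    next
      case False
      then obtain j where j: "i = Suc (Suc (Suc j))" using i
        by (intro that[of "i - 3"]) arith
      then have "P!(j) \<noteq> P!(Suc (Suc j))" using assms(1) i
        using is_path_nb[OF assms(1), of "Suc (Suc j)"] by simp
      then show ?thesis using j by simp
    qed
  qed
qed

lemma straight_cons:
  assumes "straight opp P" "length P = Suc k" "1 \<le> k \<longrightarrow> opp (P!0) v (P!1)"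
  shows "straight opp (v#P)"
  unfolding straight_def
proof (intro allI impI)
  fix i assume i: "1 \<le> i \<and> Suc i < length (v#P)"
  show "opp ((v#P) ! i) ((v#P) ! (i - 1)) ((v#P) ! Suc i)"
  proof (cases "i = 1")
    case True then show ?thesis using i assms by simp
  next
    case False
    then obtain j where j: "i = Suc (Suc j)" using i
      by (intro that[of "i - 2"]) arith
    then show ?thesis using i assms(1) straightD[OF assms(1), of "Suc j"] by simp
  qed
qed

lemma is_path_tl:
  assumes "is_path V adj P (Suc k)" shows "is_path V adj (tl P) k"
proof -
  have L: "length P = Suc (Suc k)" using assms by (simp add: is_path_def)
  show ?thesis unfolding is_path_def
  proof (intro conjI allI impI)
    show "length (tl P) = Suc k" using L by simp
    show "set (tl P) \<subseteq> V" using assms L by (cases P) (auto simp: is_path_def)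
  next
    fix i assume "i < k"
    then show "adj (tl P ! i) (tl P ! Suc i)" using assms L by (simp add: nth_tl is_path_def)
  next
    fix i assume i: "2 \<le> i \<and> i \<le> k"
    then have "P ! (Suc i - 2) \<noteq> P ! Suc i" using is_path_nb[OF assms, of "Suc i"] by simp
    moreover have "Suc i - 2 = Suc (i - 2)" using i by arith
    moreover have "tl P ! (i - 2) = P ! Suc (i - 2)" by (rule nth_tl) (use L i in \<open>simp; arith\<close>)
    moreover have "tl P ! i = P ! Suc i" by (rule nth_tl) (use L i in simp)
    ultimately show "tl P ! (i - 2) \<noteq> tl P ! i" by simp
  qed
qed

lemma straight_tl:
  assumes "straight opp P" shows "straight opp (tl P)"
  unfolding straight_def
proof (intro allI impI)
  fix i assume i: "1 \<le> i \<and> Suc i < length (tl P)"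
  have "Suc (Suc i) < length P" using i by (cases P) auto
  then have "opp (P!Suc i) (P!(Suc i - 1)) (P!Suc (Suc i))" using straightD[OF assms, of "Suc i"] i by simp
  moreover have "Suc i - 1 = Suc (i - 1)" using i by simp
  moreover have "tl P ! i = P ! Suc i" by (rule nth_tl) (use i in arith)
  moreover have "tl P ! (i - 1) = P ! Suc (i - 1)" by (rule nth_tl) (use i in arith)
  moreover have "tl P ! Suc i = P ! Suc (Suc i)" by (rule nth_tl) (use i in arith)
  ultimately show "opp (tl P ! i) (tl P ! (i - 1)) (tl P ! Suc i)" by simp
qed


lemma is_path_rev:
  assumes "is_path V adj P k" "\<And>x y. adj x y \<Longrightarrow> adj y x"
  shows "is_path V adj (rev P) k"
proof -
  have L: "length P = Suc k" using assms by (simp add: is_path_def)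
  show ?thesis unfolding is_path_def
  proof (intro conjI allI impI)
    show "length (rev P) = Suc k" using L by simp
    show "set (rev P) \<subseteq> V" using assms by (simp add: is_path_def)
  next
    fix i assume i: "i < k"
    have "adj (P ! (k - Suc i)) (P ! Suc (k - Suc i))" using is_path_adj[OF assms(1)] i by simp
    moreover have "Suc (k - Suc i) = k - i" using i by simp
    ultimately show "adj (rev P ! i) (rev P ! Suc i)" using L i assms(2) by (simp add: rev_nth)
  next
    fix i assume i: "2 \<le> i \<and> i \<le> k"
    have "k - i + 2 \<le> k" using i by arith
    then have "P ! (k - i) \<noteq> P ! (k - i + 2)" using is_path_nb[OF assms(1), of "k - i + 2"] i by simp
    moreover have "k - (i - 2) = k - i + 2" using i by arith
    ultimately show "rev P ! (i - 2) \<noteq> rev P ! i" using L i by (simp add: rev_nth)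
  qed
qed

lemma path_in_circuit_rev: "path_in_circuit c p \<Longrightarrow> path_in_circuit c (rev p)"
  unfolding path_in_circuit_def
proof (intro conjI allI impI)
  fix i assume a: "set p \<subseteq> set c \<and> (\<forall>i. Suc i < length p \<longrightarrow> {p ! i, p ! Suc i} \<in> circ_edges c)"
    and i: "Suc i < length (rev p)"
  let ?j = "length p - Suc (Suc i)"
  have "{p ! ?j, p ! Suc ?j} \<in> circ_edges c" using a i by simp
  moreover have "Suc ?j = length p - Suc i" using i by simp
  ultimately show "{rev p ! i, rev p ! Suc i} \<in> circ_edges c" using i by (simp add: rev_nth insert_commute)
qed auto

lemma suc_mod_cancel: "Suc a mod N = Suc b mod N \<Longrightarrow> a mod N = (b::nat) mod N"
  by (metis Zero_not_Suc mod_Suc nat.inject)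


definition cc :: "'a list \<Rightarrow> nat \<Rightarrow> nat \<Rightarrow> 'a" where "cc c N i = c ! (i mod N)"
definition fseg :: "'a list \<Rightarrow> nat \<Rightarrow> nat \<Rightarrow> nat \<Rightarrow> 'a list" where
  "fseg c N a k = map (\<lambda>i. cc c N (a + i)) [0..<Suc k]"

lemma fseg_len[simp]: "length (fseg c N a k) = Suc k" by (simp add: fseg_def)
lemma fseg_nth[simp]: "i \<le> k \<Longrightarrow> fseg c N a k ! i = cc c N (a + i)"
  by (simp add: fseg_def del: upt_Suc)
lemma cc_modN: "cc c N (i + N) = cc c N i" by (simp add: cc_def)
lemma cc_mod: "cc c N (i mod N) = cc c N i" by (simp add: cc_def)

definition sp :: "'a set \<Rightarrow> ('a \<Rightarrow> 'a \<Rightarrow> bool) \<Rightarrow> ('a \<Rightarrow> 'a \<Rightarrow> 'a \<Rightarrow> bool) \<Rightarrow> 'a \<Rightarrow> 'a \<Rightarrow> nat \<Rightarrow> 'a list \<Rightarrow> bool" where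
  "sp V adj opp x z k P \<longleftrightarrow> is_path V adj P k \<and> straight opp P \<and> P ! 0 = x \<and> P ! k = z"

lemma f_arith:
  fixes k1 k2 n :: nat
  assumes "k1 \<le> n" "k2 \<le> n" "even (k1 + k2)" "\<not> (k1 = n \<and> k2 = n)" "2 \<le> n"
  defines "f \<equiv> \<lambda>k::nat. if k < n then Suc k else n - 1"
  shows "n - min (f k1) (f k2) < n - min k1 k2 \<and> even (f k1 + f k2) \<and> f k1 \<le> n \<and> f k2 \<le> n"
  using assms unfolding f_def by (auto simp: min_def) presburger+

locale vk =
  fixes V :: "'a set" and adj :: "'a \<Rightarrow> 'a \<Rightarrow> bool" and opp :: "'a \<Rightarrow> 'a \<Rightarrow> 'a \<Rightarrow> bool" and n :: nat
  assumes vk: "veldkamp_ngon V adj opp n"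
begin

lemma n2: "2 \<le> n" using vk by (simp add: veldkamp_ngon_def)
lemma gr: "graph V adj" using vk by (simp add: veldkamp_ngon_def veldkamp_graph_def)
lemma adj_sym: "adj x y \<Longrightarrow> adj y x" using gr by (simp add: graph_def)
lemma adj_V1: "adj x y \<Longrightarrow> x \<in> V" using gr by (simp add: graph_def)
lemma adj_V2: "adj x y \<Longrightarrow> y \<in> V" using gr by (simp add: graph_def)
lemma adj_irr: "adj x y \<Longrightarrow> x \<noteq> y" using gr by (simp add: graph_def)

lemma oppr: "v \<in> V \<Longrightarrow> opposition_rel (nbrs adj v) (opp v)"
  using vk by (simp add: veldkamp_ngon_def veldkamp_graph_def)
lemma opp_sym: "v \<in> V \<Longrightarrow> opp v x y \<Longrightarrow> opp v y x"
  using oppr by (simp add: opposition_rel_def)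
lemma opp_adj1: "v \<in> V \<Longrightarrow> opp v x y \<Longrightarrow> adj v x"
  using oppr by (simp add: opposition_rel_def nbrs_def)
lemma opp_adj2: "v \<in> V \<Longrightarrow> opp v x y \<Longrightarrow> adj v y"
  using oppr by (simp add: opposition_rel_def nbrs_def)
lemma opp_neq: "v \<in> V \<Longrightarrow> opp v x y \<Longrightarrow> x \<noteq> y"
  using oppr by (fastforce simp add: opposition_rel_def)

lemma plump2:
  assumes "v \<in> V" "S \<subseteq> {x. adj v x}" "finite S" "card S \<le> 2"
  shows "\<exists>x. adj v x \<and> (\<forall>y\<in>S. opp v y x)"
proof -
  have "plump 2 (nbrs adj v) (opp v)" using vk assms(1) by (simp add: veldkamp_ngon_def veldkamp_graph_def)
  then obtain x where x: "x \<in> nbrs adj v" "\<forall>y\<in>S. opp v x y"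
    using assms unfolding plump_def nbrs_def by blast
  then show ?thesis using opp_sym[OF assms(1)] by (auto simp: nbrs_def)
qed

lemma plump_pair:
  assumes "v \<in> V" "adj v a" "adj v b"
  shows "\<exists>x. adj v x \<and> opp v a x \<and> opp v b x"
proof -
  have "card {a, b} \<le> 2" by (simp add: card_insert_le_m1)
  then show ?thesis using plump2[OF assms(1), of "{a,b}"] assms by auto
qed

lemma VP2:
  assumes "1 \<le> k" "k \<le> n - 1" "is_path V adj p k" "straight opp p" "is_path V adj q j" "j \<le> k"
    "straight opp q" "hd q = hd p" "last q = last p"
  shows "q = p"
  using vk assms unfolding veldkamp_ngon_def by blast

lemma VP3:
  assumes "is_path V adj p (n + 1)" "straight opp p"
  shows "\<exists>c. closed_path V adj c (2 * n) \<and> straight_circuit V adj opp c \<and> path_in_circuit c p"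
  using vk assms unfolding veldkamp_ngon_def by blast

lemma hd_nth: "is_path V adj p k \<Longrightarrow> hd p = p ! 0"
  by (cases p) (auto simp: is_path_def)
lemma last_nth: "is_path V adj p k \<Longrightarrow> last p = p ! k"
  by (cases p rule: rev_cases) (auto simp: is_path_def nth_append)

lemma single_path: "x \<in> V \<Longrightarrow> is_path V adj [x] 0"
  by (simp add: is_path_def)
lemma single_straight: "straight opp [x]"
  by (simp add: straight_def)


context
  fixes c assumes cp: "closed_path V adj c (2*n)" and sc: "straight_circuit V adj opp c"
begin

abbreviation "N \<equiv> 2 * n"
abbreviation "C \<equiv> cc c N"

lemma cpath: "is_path V adj c N" using cp by (simp add: closed_path_def)
lemma c0N: "c ! 0 = c ! N" using cp by (simp add: closed_path_def)
lemma Npos: "0 < N" using n2 by simp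

lemma C_V: "C i \<in> V"
  unfolding cc_def using is_path_V[OF cpath] Npos by (simp add: less_imp_le)

lemma C_mem: "C i \<in> set c"
proof -
  have "i mod N < length c" using is_path_len[OF cpath] mod_less_divisor[OF Npos, of i] by simp
  then show ?thesis unfolding cc_def by simp
qed

lemma C_Suc: "C (Suc i) = c ! Suc (i mod N)"
proof (cases "Suc (i mod N) < N")
  case True then show ?thesis by (simp add: cc_def mod_Suc)
next
  case False
  then have "Suc (i mod N) = N" using mod_less_divisor[OF Npos, of i] by linarith
  then show ?thesis using c0N by (simp add: cc_def mod_Suc)
qed

lemma C_adj: "adj (C i) (C (Suc i))"
  unfolding C_Suc using is_path_adj[OF cpath, of "i mod N"] Npos by (simp add: cc_def)

lemma C_edge: "{C i, C (Suc i)} \<in> circ_edges c"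
  unfolding circ_edges_def C_Suc using is_path_len[OF cpath] Npos
  by (auto simp: cc_def intro!: exI[of _ "i mod N"])

lemma C_nb_part: "i mod N \<noteq> N - 1 \<Longrightarrow> C i \<noteq> C (Suc (Suc i))"
proof -
  assume a: "i mod N \<noteq> N - 1"
  have lt: "Suc (i mod N) < N" using a mod_less_divisor[OF Npos, of i] by linarith
  then have "Suc i mod N = Suc (i mod N)" by (simp add: mod_Suc)
  then have "C (Suc (Suc i)) = c ! Suc (Suc (i mod N))" using C_Suc[of "Suc i"] by simp
  moreover have "c ! (Suc (Suc (i mod N)) - 2) \<noteq> c ! Suc (Suc (i mod N))"
    using is_path_nb[OF cpath, of "Suc (Suc (i mod N))"] lt by simp
  ultimately show ?thesis by (simp add: cc_def)
qed

lemma in_circ_straight: "is_path V adj q s \<Longrightarrow> path_in_circuit c q \<Longrightarrow> straight opp q"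
  using sc unfolding straight_circuit_def by blast

lemma fseg_in: "path_in_circuit c (fseg c N a k)"
  unfolding path_in_circuit_def
proof (intro conjI allI impI)
  show "set (fseg c N a k) \<subseteq> set c" using C_mem by (auto simp: fseg_def)
next
  fix i assume "Suc i < length (fseg c N a k)"
  then show "{fseg c N a k ! i, fseg c N a k ! Suc i} \<in> circ_edges c"
    using C_edge[of "a + i"] by simp
qed

lemma fseg_path_gen:
  assumes "\<And>i. i + 2 \<le> k \<Longrightarrow> C (a + i) \<noteq> C (Suc (Suc (a + i)))"
  shows "is_path V adj (fseg c N a k) k"
  unfolding is_path_def
proof (intro conjI allI impI)
  show "set (fseg c N a k) \<subseteq> V" using C_V by (auto simp: fseg_def)
next
  fix i assume "i < k" then show "adj (fseg c N a k ! i) (fseg c N a k ! Suc i)"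
    using C_adj[of "a + i"] by simp
next
  fix i assume i: "2 \<le> i \<and> i \<le> k"
  then have "i - 2 + 2 \<le> k" by arith
  then have "C (a + (i - 2)) \<noteq> C (Suc (Suc (a + (i - 2))))" using assms[of "i - 2"] by blast
  moreover have "Suc (Suc (a + (i - 2))) = a + i" using i by arith
  moreover have "fseg c N a k ! (i-2) = C (a + (i-2))" using i by (intro fseg_nth) arith
  moreover have "fseg c N a k ! i = C (a + i)" using i by (intro fseg_nth) arith
  ultimately show "fseg c N a k ! (i - 2) \<noteq> fseg c N a k ! i" by metis
qed simp


lemma pair_path: "adj x y \<Longrightarrow> is_path V adj [x, y] 1"
  using adj_V1 adj_V2 by (auto simp: is_path_def less_Suc_eq)
lemma pair_straight: "straight opp [x, y]"
  by (auto simp: straight_def)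

lemma wrap: "c ! 1 \<noteq> c ! (N - 1)"
proof
  assume eq: "c ! 1 = c ! (N - 1)"
  let ?A = "fseg c N 1 (n-1)" and ?B0 = "fseg c N n (n-1)"
  have pA: "is_path V adj ?A (n-1)"
  proof (rule fseg_path_gen)
    fix i assume i: "i + 2 \<le> n - 1"
    then have "(1 + i) mod N = 1 + i" by simp
    then show "C (1 + i) \<noteq> C (Suc (Suc (1 + i)))" using i by (intro C_nb_part) arith
  qed
  have pB0: "is_path V adj ?B0 (n-1)"
  proof (rule fseg_path_gen)
    fix i assume i: "i + 2 \<le> n - 1"
    then have "(n + i) mod N = n + i" by simp
    then show "C (n + i) \<noteq> C (Suc (Suc (n + i)))" using i by (intro C_nb_part) arith
  qed
  have pB: "is_path V adj (rev ?B0) (n-1)" by (rule is_path_rev[OF pB0 adj_sym])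
  have sA: "straight opp ?A" by (rule in_circ_straight[OF pA fseg_in])
  have sB: "straight opp (rev ?B0)" by (rule in_circ_straight[OF pB path_in_circuit_rev[OF fseg_in]])
  have n1: "1 \<le> n - 1" using n2 by simp
  have "hd (rev ?B0) = ?B0 ! (n - 1)" using pB0 by (simp add: hd_rev last_nth)
  also have "\<dots> = C (N - 1)" using n2 by (simp add: numeral_2_eq_2)
  also have "\<dots> = c ! (N - 1)" using Npos by (simp add: cc_def)
  also have "\<dots> = C 1" using eq n2 by (simp add: cc_def)
  also have "\<dots> = hd ?A" using pA by (simp add: hd_nth)
  finally have h: "hd (rev ?B0) = hd ?A" .
  have "last (rev ?B0) = ?B0 ! 0" using pB0 by (simp add: last_rev hd_nth)
  also have "\<dots> = C n" by simp
  also have "\<dots> = ?A ! (n - 1)" using n2 by simp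
  also have "\<dots> = last ?A" using pA by (simp add: last_nth)
  finally have l: "last (rev ?B0) = last ?A" .
  have "rev ?B0 = ?A" using VP2[OF n1 order.refl pA sA pB order.refl sB h l] .
  then have "rev ?B0 ! (n - 2) = ?A ! (n - 2)" by simp
  moreover have "rev ?B0 ! (n - 2) = C (n + 1)" using n2 by (simp add: rev_nth)
  moreover have "Suc (n - 2) = n - 1" using n2 by arith
  moreover have "?A ! (n - 2) = C (1 + (n - 2))" using n2 by simp
  ultimately have "rev ?B0 ! (n - 2) = C (n + 1)" "?A ! (n - 2) = C (n - 1)" by simp_all
  moreover have "C (n - 1) \<noteq> C (Suc (Suc (n - 1)))" using n2 by (intro C_nb_part) simp
  moreover have "Suc (Suc (n - 1)) = n + 1" using n2 by simp
  ultimately show False by (metis \<open>rev ?B0 = ?A\<close>)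
qed

lemma C_nb: "C i \<noteq> C (Suc (Suc i))"
proof (cases "i mod N = N - 1")
  case False then show ?thesis by (rule C_nb_part)
next
  case True
  then have "Suc (i mod N) = N" using Npos by simp
  then have s: "Suc i mod N = 0" by (simp add: mod_Suc)
  have "C (Suc (Suc i)) = c ! 1" using C_Suc[of "Suc i"] s by simp
  moreover have "C i = c ! (N - 1)" using True by (simp add: cc_def)
  ultimately show ?thesis using wrap by simp
qed

lemma fseg_path: "is_path V adj (fseg c N a k) k"
  by (rule fseg_path_gen) (rule C_nb)

lemma fseg_straight: "straight opp (fseg c N a k)"
  by (rule in_circ_straight[OF fseg_path fseg_in])

lemma C_inj_aux:
  assumes "x < y" "y < N" "C x = C y" shows False
proof -
  obtain s d where d: "1 \<le> d" "d \<le> n" and sd: "C s = C (s + d)"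
  proof (cases "y - x \<le> n")
    case True then show ?thesis using that[of "y - x" x] assms by simp
  next
    case False
    have "C (y + (N - (y - x))) = C (x + N)" using assms by (simp add: algebra_simps)
    also have "\<dots> = C x" by (rule cc_modN)
    finally show ?thesis using that[of "N - (y - x)" y] assms False by simp
  qed
  show False
  proof (cases "d \<le> n - 1")
    case True
    have p: "is_path V adj (fseg c N s d) d" by (rule fseg_path)
    have q: "is_path V adj [C s] 0" using C_V by (simp add: single_path)
    have "[C s] = fseg c N s d"
      apply (rule VP2[OF d(1) True p fseg_straight q _ single_straight])
      using sd p by (auto simp: hd_nth last_nth)
    then show False using d by (metis fseg_len length_Cons list.size(3) nat.inject not_one_le_zero)
  next
    case False
    then have dn: "d = n" using d by simp
    have n1: "1 \<le> n - 1" using n2 by simp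
    have p: "is_path V adj (fseg c N (Suc s) (n-1)) (n-1)" by (rule fseg_path)
    have q: "is_path V adj [C (Suc s), C s] 1" by (rule pair_path) (rule adj_sym[OF C_adj])
    have e: "Suc s + (n - 1) = s + d" using dn n2 by simp
    have "[C (Suc s), C s] = fseg c N (Suc s) (n-1)"
      apply (rule VP2[OF n1 order.refl p fseg_straight q _ pair_straight])
      using n1 apply simp
      using p apply (simp add: hd_nth)
    proof -
      have "last (fseg c N (Suc s) (n-1)) = C (Suc s + (n - 1))" using p by (simp add: last_nth)
      moreover have "s + d = Suc s + (n - 1)" using dn n2 by arith
      ultimately show "last [C (Suc s), C s] = last (fseg c N (Suc s) (n - 1))" using sd by simp
    qed
    then have "[C (Suc s), C s] ! 1 = fseg c N (Suc s) (n-1) ! 1" by simp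
    then have "C s = C (Suc (Suc s))" using n1 by simp
    then show False using C_nb by simp
  qed
qed

lemma C_eq_iff: "C a = C b \<longleftrightarrow> a mod N = b mod N"
proof
  assume e: "C a = C b"
  show "a mod N = b mod N"
  proof (rule ccontr)
    assume ne: "a mod N \<noteq> b mod N"
    have e': "C (a mod N) = C (b mod N)" using e by (simp add: cc_mod)
    show False
    proof (cases "a mod N < b mod N")
      case True then show False using C_inj_aux[OF True _ e'] Npos by simp
    next
      case False then have "b mod N < a mod N" using ne by simp
      then show False using C_inj_aux[OF _ _ e'[symmetric]] Npos by simp
    qed
  qed
next
  assume "a mod N = b mod N" then show "C a = C b" by (simp add: cc_def)
qed


lemma suc_mod_cong: "a mod N = b mod N \<Longrightarrow> Suc a mod N = Suc (b::nat) mod N"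
  by (metis mod_Suc_eq)

lemma circ_edge_C: "e \<in> circ_edges c \<Longrightarrow> \<exists>r. e = {C r, C (Suc r)}"
proof -
  assume "e \<in> circ_edges c"
  then obtain r where r: "e = {c ! r, c ! Suc r}" "Suc r < length c" by (auto simp: circ_edges_def)
  then have "r < N" using is_path_len[OF cpath] by simp
  then have "c ! r = C r" "c ! Suc r = C (Suc r)" using C_Suc[of r] by (simp_all add: cc_def)
  then show ?thesis using r by auto
qed

lemma locate:
  assumes p: "is_path V adj p k" and pc: "path_in_circuit c p" and k: "1 \<le> k" "k \<le> N"
  shows "\<exists>j. (\<forall>i\<le>k. p ! i = C (j + i)) \<or> (\<forall>i\<le>k. p ! i = C (j + N - i))"
proof -
  have L: "length p = Suc k" using p by (simp add: is_path_def)
  have edge: "\<And>i. Suc i \<le> k \<Longrightarrow> \<exists>r. {p ! i, p ! Suc i} = {C r, C (Suc r)}"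
    using pc L circ_edge_C unfolding path_in_circuit_def by (metis Suc_le_mono le_imp_less_Suc)
  obtain m where m: "{p ! 0, p ! 1} = {C m, C (Suc m)}" using edge[of 0] k by auto
  show ?thesis
  proof (cases "p ! 0 = C m \<and> p ! 1 = C (Suc m)")
    case True
    have "\<forall>i. Suc i \<le> k \<longrightarrow> p ! i = C (m + i) \<and> p ! Suc i = C (m + Suc i)"
    proof (intro allI)
      fix i show "Suc i \<le> k \<longrightarrow> p ! i = C (m + i) \<and> p ! Suc i = C (m + Suc i)"
      proof (induction i)
        case 0 then show ?case using True by simp
      next
        case (Suc i)
        show ?case
        proof
          assume a: "Suc (Suc i) \<le> k"
          then have IH: "p ! i = C (m + i)" "p ! Suc i = C (m + Suc i)" using Suc by auto
          obtain r where r: "{p ! Suc i, p ! Suc (Suc i)} = {C r, C (Suc r)}" using edge[OF a] by blast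
          have nb: "p ! i \<noteq> p ! Suc (Suc i)" using is_path_nb[OF p, of "Suc (Suc i)"] a by simp
          show "p ! Suc i = C (m + Suc i) \<and> p ! Suc (Suc i) = C (m + Suc (Suc i))"
          proof (cases "p ! Suc i = C r \<and> p ! Suc (Suc i) = C (Suc r)")
            case True
            then have "r mod N = (m + Suc i) mod N" using IH C_eq_iff by simp
            then have "Suc r mod N = Suc (m + Suc i) mod N" by (rule suc_mod_cong)
            then show ?thesis using True IH C_eq_iff by simp
          next
            case False
            then have F: "p ! Suc i = C (Suc r)" "p ! Suc (Suc i) = C r" using r by (auto simp: doubleton_eq_iff)
            then have "Suc r mod N = Suc (m + i) mod N" using IH C_eq_iff by simp
            then have "r mod N = (m + i) mod N" by (rule suc_mod_cancel)
            then have "p ! Suc (Suc i) = p ! i" using F IH C_eq_iff by simp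
            then show ?thesis using nb by simp
          qed
        qed
      qed
    qed
    then have "\<forall>i\<le>k. p ! i = C (m + i)"
      by (metis k(1) Suc_le_D le_Suc_eq not0_implies_Suc One_nat_def le_antisym le_SucE)
    then show ?thesis by blast
  next
    case False
    then have F0: "p ! 0 = C (Suc m)" "p ! 1 = C m" using m by (auto simp: doubleton_eq_iff)
    let ?j = "Suc m"
    have "\<forall>i. Suc i \<le> k \<longrightarrow> p ! i = C (?j + N - i) \<and> p ! Suc i = C (?j + N - Suc i)"
    proof (intro allI)
      fix i show "Suc i \<le> k \<longrightarrow> p ! i = C (?j + N - i) \<and> p ! Suc i = C (?j + N - Suc i)"
      proof (induction i)
        case 0
        have "C (?j + N) = C ?j" by (rule cc_modN)
        moreover have "C (?j + N - Suc 0) = C m" using cc_modN[of c N m] by simp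
        ultimately show ?case using F0 by simp
      next
        case (Suc i)
        show ?case
        proof
          assume a: "Suc (Suc i) \<le> k"
          then have IH: "p ! i = C (?j + N - i)" "p ! Suc i = C (?j + N - Suc i)" using Suc by auto
          define t where "t = ?j + N - Suc (Suc i)"
          have t1: "?j + N - Suc i = Suc t" "?j + N - i = Suc (Suc t)" using a k unfolding t_def by arith+
          obtain r where r: "{p ! Suc i, p ! Suc (Suc i)} = {C r, C (Suc r)}" using edge[OF a] by blast
          have nb: "p ! i \<noteq> p ! Suc (Suc i)" using is_path_nb[OF p, of "Suc (Suc i)"] a by simp
          show "p ! Suc i = C (?j + N - Suc i) \<and> p ! Suc (Suc i) = C (?j + N - Suc (Suc i))"
          proof (cases "p ! Suc i = C r \<and> p ! Suc (Suc i) = C (Suc r)")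
            case True
            then have "r mod N = Suc t mod N" using IH t1 C_eq_iff by simp
            then have "Suc r mod N = Suc (Suc t) mod N" by (rule suc_mod_cong)
            then have "p ! Suc (Suc i) = p ! i" using True IH t1 C_eq_iff by simp
            then show ?thesis using nb by simp
          next
            case False
            then have F: "p ! Suc i = C (Suc r)" "p ! Suc (Suc i) = C r" using r by (auto simp: doubleton_eq_iff)
            then have "Suc r mod N = Suc t mod N" using IH t1 C_eq_iff by simp
            then have "r mod N = t mod N" by (rule suc_mod_cancel)
            then show ?thesis using F IH C_eq_iff t_def by simp
          qed
        qed
      qed
    qed
    then have "\<forall>i\<le>k. p ! i = C (?j + N - i)"
      by (metis k(1) Suc_le_D le_Suc_eq not0_implies_Suc One_nat_def le_antisym le_SucE)
    then show ?thesis by blast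
  qed
qed


lemma ROT_c:
  assumes p: "is_path V adj p (Suc n)" and pc: "path_in_circuit c p"
  shows "\<exists>q. is_path V adj q n \<and> straight opp q \<and> q ! 0 = p ! 1 \<and> q ! 1 = p ! 0 \<and> q ! n = p ! Suc n"
proof -
  obtain j where j: "(\<forall>i\<le>Suc n. p ! i = C (j + i)) \<or> (\<forall>i\<le>Suc n. p ! i = C (j + N - i))"
    using locate[OF p pc] n2 by auto
  show ?thesis
  proof (cases "\<forall>i\<le>Suc n. p ! i = C (j + i)")
    case True
    let ?q = "rev (fseg c N (j + n + 1) n)"
    have qp: "is_path V adj ?q n" by (rule is_path_rev[OF fseg_path adj_sym])
    have qs: "straight opp ?q" by (rule in_circ_straight[OF qp path_in_circuit_rev[OF fseg_in]])
    have "?q ! 0 = C (j + n + 1 + n)" by (simp add: rev_nth)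
    also have "\<dots> = C ((j + 1) + N)" by (simp add: algebra_simps mult_2_right)
    also have "\<dots> = p ! 1" using True cc_modN[of c N "j+1"] by simp
    finally have q0: "?q ! 0 = p ! 1" .
    have "?q ! 1 = C (j + n + 1 + (n - 1))" using n2 by (simp add: rev_nth)
    also have "\<dots> = C (j + N)" using n2 by (simp add: algebra_simps mult_2_right)
    also have "\<dots> = p ! 0" using True cc_modN[of c N j] by simp
    finally have q1: "?q ! 1 = p ! 0" .
    have "?q ! n = C (j + n + 1)" by (simp add: rev_nth)
    also have "\<dots> = p ! Suc n" using True by simp
    finally have qn: "?q ! n = p ! Suc n" .
    show ?thesis using qp qs q0 q1 qn by blast
  next
    case False
    then have B: "\<forall>i\<le>Suc n. p ! i = C (j + N - i)" using j by blast
    let ?q = "fseg c N (j + N - 1) n"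
    have qp: "is_path V adj ?q n" by (rule fseg_path)
    have qs: "straight opp ?q" by (rule fseg_straight)
    have q0: "?q ! 0 = p ! 1" using B by simp
    have "?q ! 1 = C (j + N)" using n2 by simp
    also have "\<dots> = p ! 0" using B by simp
    finally have q1: "?q ! 1 = p ! 0" .
    have "?q ! n = C ((j + N - Suc n) + N)" using n2 by (simp add: algebra_simps)
    also have "\<dots> = p ! Suc n" using B cc_modN[of c N "j + N - Suc n"] by simp
    finally have qn: "?q ! n = p ! Suc n" .
    show ?thesis using qp qs q0 q1 qn by blast
  qed
qed

end

lemma ROT:
  assumes p: "is_path V adj p (Suc n)" and s: "straight opp p"
  shows "\<exists>q. is_path V adj q n \<and> straight opp q \<and> q ! 0 = p ! 1 \<and> q ! 1 = p ! 0 \<and> q ! n = p ! Suc n"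
proof -
  obtain c where "closed_path V adj c (2 * n)" "straight_circuit V adj opp c" "path_in_circuit c p"
    using VP3[of p] p s by auto
  then show ?thesis using ROT_c p by blast
qed


lemma SHORT:
  assumes p: "is_path V adj p (Suc n)" and s: "straight opp p"
  shows "\<exists>q. sp V adj opp (p ! 0) (p ! Suc n) (n - 1) q"
proof -
  obtain q where q: "is_path V adj q n" "straight opp q" "q ! 0 = p ! 1" "q ! 1 = p ! 0" "q ! n = p ! Suc n"
    using ROT[OF p s] by blast
  have n1: "n = Suc (n - 1)" using n2 by simp
  have L: "length q = Suc n" using q(1) by (simp add: is_path_def)
  have "is_path V adj (tl q) (n - 1)" using is_path_tl[of V adj q "n-1"] q(1) n1 by simp
  moreover have "straight opp (tl q)" using straight_tl q(2) by blast
  moreover have "tl q ! 0 = p ! 0" using q(4) L n1 by (subst nth_tl) simp_all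
  moreover have "tl q ! (n - 1) = p ! Suc n" using q(5) L n1 by (simp add: nth_tl)
  ultimately show ?thesis unfolding sp_def by blast
qed

lemma sp_V: "sp V adj opp x z k P \<Longrightarrow> z \<in> V"
  unfolding sp_def using is_path_V by blast
lemma sp_V0: "sp V adj opp x z k P \<Longrightarrow> x \<in> V"
  unfolding sp_def using is_path_V by fastforce
lemma sp_pred_adj: "sp V adj opp x z k P \<Longrightarrow> 1 \<le> k \<Longrightarrow> adj z (P ! (k - 1))"
  unfolding sp_def using is_path_adj[of V adj P k "k - 1"] adj_sym by simp

lemma sp_triv: "x \<in> V \<Longrightarrow> sp V adj opp x x 0 [x]"
  by (simp add: sp_def single_path single_straight)

lemma APP:
  assumes P: "sp V adj opp x z k P" and y: "adj z y" and o: "1 \<le> k \<longrightarrow> opp z (P ! (k - 1)) y"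
  shows "is_path V adj (P @ [y]) (Suc k) \<and> straight opp (P @ [y]) \<and> (\<forall>i\<le>k. (P @ [y]) ! i = P ! i)
     \<and> (P @ [y]) ! Suc k = y"
proof -
  have zV: "z \<in> V" using sp_V[OF P] .
  have L: "length P = Suc k" using P by (simp add: sp_def is_path_def)
  have "is_path V adj (P @ [y]) (Suc k)"
    apply (rule is_path_app)
    using P y adj_V2[OF y] o opp_neq[OF zV] by (auto simp: sp_def)
  moreover have "straight opp (P @ [y])"
    apply (rule straight_app[of _ _ k])
    using P o L by (auto simp: sp_def)
  moreover have "\<forall>i\<le>k. (P @ [y]) ! i = P ! i" using L by (simp add: nth_append)
  moreover have "(P @ [y]) ! Suc k = y" using L by (simp add: nth_append)
  ultimately show ?thesis by blast
qed

lemma STEP: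
  assumes P: "sp V adj opp x z k P" and k: "k \<le> n" and y: "adj z y" and o: "1 \<le> k \<longrightarrow> opp z (P ! (k - 1)) y"
  shows "\<exists>P'. sp V adj opp x y (if k < n then Suc k else n - 1) P'"
proof -
  note A = APP[OF P y o]
  have x0: "(P @ [y]) ! 0 = x" using A P by (simp add: sp_def)
  show ?thesis
  proof (cases "k < n")
    case True
    then show ?thesis using A x0 unfolding sp_def by auto
  next
    case False
    then have "k = n" using k by simp
    then show ?thesis using SHORT[of "P @ [y]"] A x0 False by auto
  qed
qed

lemma STEP2:
  assumes P1: "sp V adj opp x1 z k1 P1" and P2: "sp V adj opp x2 z k2 P2" and k: "k1 \<le> n" "k2 \<le> n"
  shows "\<exists>y Q1 Q2. sp V adj opp x1 y (if k1 < n then Suc k1 else n - 1) Q1 \<and>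
                   sp V adj opp x2 y (if k2 < n then Suc k2 else n - 1) Q2"
proof -
  have zV: "z \<in> V" using sp_V[OF P1] .
  let ?S = "{a. (1 \<le> k1 \<and> a = P1 ! (k1 - 1)) \<or> (1 \<le> k2 \<and> a = P2 ! (k2 - 1))}"
  have sub: "?S \<subseteq> {P1 ! (k1 - 1), P2 ! (k2 - 1)}" by auto
  have fin: "finite ?S" by (rule finite_subset[OF sub]) simp
  have "card ?S \<le> card {P1 ! (k1 - 1), P2 ! (k2 - 1)}" by (rule card_mono[OF _ sub]) simp
  also have "\<dots> \<le> 2" by (simp add: card_insert_le_m1)
  finally have c2: "card ?S \<le> 2" .
  have "?S \<subseteq> {x. adj z x}" using sp_pred_adj[OF P1] sp_pred_adj[OF P2] by auto
  then obtain y where y: "adj z y" "\<forall>a\<in>?S. opp z a y" using plump2[OF zV _ fin c2] by blast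
  obtain Q1 where Q1: "sp V adj opp x1 y (if k1 < n then Suc k1 else n - 1) Q1"
    using STEP[OF P1 k(1) y(1)] y(2) by auto
  obtain Q2 where Q2: "sp V adj opp x2 y (if k2 < n then Suc k2 else n - 1) Q2"
    using STEP[OF P2 k(2) y(1)] y(2) by auto
  show ?thesis using Q1 Q2 by blast
qed

lemma WALK2:
  assumes "sp V adj opp x1 z k1 P1" "sp V adj opp x2 z k2 P2" "k1 \<le> n" "k2 \<le> n"
  shows "\<exists>z' k1' Q1 Q2. k1' \<le> n \<and> sp V adj opp x1 z' k1' Q1 \<and> sp V adj opp x2 z' n Q2"
  using assms
proof (induction "n - k2" arbitrary: z k1 k2 P1 P2)
  case 0
  then have "k2 = n" by simp
  then show ?case using 0 by blast
next
  case (Suc m)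
  then have lt: "k2 < n" by simp
  obtain y Q1 Q2 where Q: "sp V adj opp x1 y (if k1 < n then Suc k1 else n - 1) Q1"
      "sp V adj opp x2 y (if k2 < n then Suc k2 else n - 1) Q2"
    using STEP2[OF Suc.prems] by blast
  have Q2': "sp V adj opp x2 y (Suc k2) Q2" using Q(2) lt by simp
  show ?case
    apply (rule Suc.hyps(1)[OF _ Q(1) Q2'])
    using Suc.hyps(2) lt by auto
qed

lemma WALK:
  assumes "sp V adj opp x1 z k1 P1" "sp V adj opp x2 z k2 P2" "k1 \<le> n" "k2 \<le> n" "even (k1 + k2)"
  shows "\<exists>z' Q1 Q2. sp V adj opp x1 z' n Q1 \<and> sp V adj opp x2 z' n Q2"
  using assms
proof (induction "n - min k1 k2" arbitrary: z k1 k2 P1 P2 rule: less_induct)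
  case less
  show ?case
  proof (cases "k1 = n \<and> k2 = n")
    case True then show ?thesis using less by blast
  next
    case False
    obtain y Q1 Q2 where Q: "sp V adj opp x1 y (if k1 < n then Suc k1 else n - 1) Q1"
        "sp V adj opp x2 y (if k2 < n then Suc k2 else n - 1) Q2"
      using STEP2[OF less.prems(1-4)] by blast
    note ar = f_arith[OF less.prems(3,4,5) False n2]
    show ?thesis by (rule less.hyps[OF _ Q(1) Q(2)]) (use ar in auto)
  qed
qed

lemma FACT1:
  assumes R: "sp V adj opp w z n R" and x: "adj w x"
  shows "\<exists>R'. sp V adj opp w z n R' \<and> R' ! 1 = x"
proof -
  have wV: "w \<in> V" using sp_V0[OF R] .
  have Rp: "is_path V adj R n" "straight opp R" "R ! 0 = w" "R ! n = z" using R by (auto simp: sp_def)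
  have L: "length R = Suc n" using Rp(1) by (simp add: is_path_def)
  have r1: "adj w (R ! 1)" using is_path_adj[OF Rp(1), of 0] Rp(3) n2 by simp
  obtain m where m: "adj w m" "opp w (R ! 1) m" "opp w x m" using plump_pair[OF wV r1 x] by blast
  have mr: "m \<noteq> R ! 1" using opp_neq[OF wV m(2)] by simp
  have p1: "is_path V adj (m # R) (Suc n)"
    apply (rule is_path_cons[OF Rp(1)])
    using m Rp(3) adj_sym[OF m(1)] adj_V2[OF m(1)] mr by auto
  have s1: "straight opp (m # R)"
    apply (rule straight_cons[OF Rp(2) L])
    using m Rp(3) opp_sym[OF wV] by auto
  obtain q where q: "is_path V adj q n" "straight opp q" "q ! 0 = w" "q ! 1 = m" "q ! n = z"
    using ROT[OF p1 s1] Rp L by auto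
  have Lq: "length q = Suc n" using q(1) by (simp add: is_path_def)
  have xm: "x \<noteq> m" using opp_neq[OF wV m(3)] .
  have p2: "is_path V adj (x # q) (Suc n)"
    apply (rule is_path_cons[OF q(1)])
    using q(3,4) adj_sym[OF x] adj_V2[OF x] xm by auto
  have s2: "straight opp (x # q)"
    apply (rule straight_cons[OF q(2) Lq])
    using m q(3,4) by auto
  obtain q' where q': "is_path V adj q' n" "straight opp q'" "q' ! 0 = w" "q' ! 1 = x" "q' ! n = z"
    using ROT[OF p2 s2] q Lq by auto
  then show ?thesis unfolding sp_def by blast
qed

lemma PROP:
  assumes "sp V adj opp u z k1 P1" "sp V adj opp w z k2 P2" "k1 \<le> n" "k2 \<le> n" and wv: "adj w v"
  shows "\<exists>z' k1' k2' Q1 Q2. k1' \<le> n \<and> k2' \<le> n \<and> sp V adj opp u z' k1' Q1 \<and> sp V adj opp v z' k2' Q2"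
proof -
  obtain z' k1' Q1 R where W: "k1' \<le> n" "sp V adj opp u z' k1' Q1" "sp V adj opp w z' n R"
    using WALK2[OF assms(1-4)] by blast
  have wV: "w \<in> V" using adj_V1[OF wv] .
  have "card {v} \<le> 2" by simp
  then obtain x where x: "adj w x" "opp w v x" using plump2[OF wV, of "{v}"] wv by auto
  obtain R' where R': "sp V adj opp w z' n R'" "R' ! 1 = x" using FACT1[OF W(3) x(1)] by blast
  have Rp: "is_path V adj R' n" "straight opp R'" "R' ! 0 = w" "R' ! n = z'" using R'(1) by (auto simp: sp_def)
  have L: "length R' = Suc n" using Rp(1) by (simp add: is_path_def)
  have vx: "v \<noteq> x" using opp_neq[OF wV x(2)] .
  have p1: "is_path V adj (v # R') (Suc n)"
    apply (rule is_path_cons[OF Rp(1)])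
    using R'(2) Rp(3) adj_sym[OF wv] adj_V1[OF wv] adj_V2[OF wv] vx by auto
  have s1: "straight opp (v # R')"
    apply (rule straight_cons[OF Rp(2) L])
    using x R'(2) Rp(3) by auto
  obtain Q2 where Q2: "sp V adj opp v z' (n - 1) Q2" using SHORT[OF p1 s1] Rp L by auto
  have "n - 1 \<le> n" by simp
  then show ?thesis using W Q2 by blast
qed

lemma MEET_walk:
  assumes w: "walk V adj xs" "hd xs = u"
  shows "i < length xs \<Longrightarrow> \<exists>z k1 k2 P1 P2. k1 \<le> n \<and> k2 \<le> n \<and> sp V adj opp u z k1 P1 \<and> sp V adj opp (xs ! i) z k2 P2"
proof (induction i)
  case 0
  have ne: "xs \<noteq> []" using w by (simp add: walk_def)
  then have "xs ! 0 = u" using w by (simp add: hd_conv_nth)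
  moreover have "u \<in> V" using w ne by (auto simp: walk_def)
  ultimately show ?case using sp_triv by fastforce
next
  case (Suc i)
  then obtain z k1 k2 P1 P2 where H: "k1 \<le> n" "k2 \<le> n" "sp V adj opp u z k1 P1" "sp V adj opp (xs ! i) z k2 P2"
    by auto
  have "adj (xs ! i) (xs ! Suc i)" using w Suc.prems by (simp add: walk_def)
  then show ?case using PROP[OF H(3,4,1,2)] by blast
qed

lemma MEET:
  assumes "connected_graph V adj" "u \<in> V" "v \<in> V"
  shows "\<exists>z k1 k2 P1 P2. k1 \<le> n \<and> k2 \<le> n \<and> sp V adj opp u z k1 P1 \<and> sp V adj opp v z k2 P2"
proof -
  obtain xs where xs: "walk V adj xs" "hd xs = u" "last xs = v" using assms unfolding connected_graph_def by blast
  have ne: "xs \<noteq> []" using xs by (simp add: walk_def)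
  then have "v = xs ! (length xs - 1)" using xs by (simp add: last_conv_nth)
  then show ?thesis using MEET_walk[OF xs(1,2), of "length xs - 1"] ne by simp
qed

end

lemma col_list:
  assumes col: "\<forall>x y. adj x y \<longrightarrow> col x \<noteq> col y"
    and a: "\<forall>i. Suc i < length xs \<longrightarrow> adj (xs ! i) (xs ! Suc i)"
  shows "i < length xs \<Longrightarrow> col (xs ! i) = (col (xs ! 0) = even i)"
proof (induction i)
  case 0 then show ?case by simp
next
  case (Suc i)
  then have "col (xs ! i) \<noteq> col (xs ! Suc i)" using col a by blast
  then show ?case using Suc by auto
qed


context vk
begin

lemma conn: "connected_graph V adj" using vk by (simp add: veldkamp_ngon_def)
lemma bip: "\<exists>col::'a \<Rightarrow> bool. \<forall>x y. adj x y \<longrightarrow> col x \<noteq> col y"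
  using vk unfolding veldkamp_ngon_def bipartite_graph_def by blast

lemma CORE:
  fixes col :: "'a \<Rightarrow> bool"
  assumes col: "\<forall>x y. adj x y \<longrightarrow> col x \<noteq> col y" and uv: "u \<in> V" "v \<in> V" "col u = col v"
  shows "\<exists>z R1 R2. sp V adj opp u z n R1 \<and> sp V adj opp v z n R2"
proof -
  obtain z k1 k2 P1 P2 where M: "k1 \<le> n" "k2 \<le> n" "sp V adj opp u z k1 P1" "sp V adj opp v z k2 P2"
    using MEET[OF conn uv(1,2)] by blast
  have c1: "col z = (col u = even k1)"
  proof -
    have p: "is_path V adj P1 k1" "P1 ! 0 = u" "P1 ! k1 = z" using M(3) by (auto simp: sp_def)
    then show ?thesis using col_list[OF col, of P1 k1] by (auto simp: is_path_def)
  qed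
  have c2: "col z = (col v = even k2)"
  proof -
    have p: "is_path V adj P2 k2" "P2 ! 0 = v" "P2 ! k2 = z" using M(4) by (auto simp: sp_def)
    then show ?thesis using col_list[OF col, of P2 k2] by (auto simp: is_path_def)
  qed
  have "even (k1 + k2)" using c1 c2 uv(3) by auto
  then show ?thesis using WALK[OF M(3,4,1,2)] by blast
qed

lemma edge_opp:
  assumes R: "sp V adj opp a z n R" and b: "R ! 1 = b" and y: "adj z y" and o: "opp z (R ! (n - 1)) y"
  shows "opposite_edges V adj opp n {a, b} {z, y}"
proof -
  note A = APP[OF R y] o
  have r: "R ! 0 = a" "R ! n = z" using R by (auto simp: sp_def)
  have n1: "1 \<le> n" using n2 by simp
  have "(R @ [y]) ! 0 = a" "(R @ [y]) ! 1 = b" "(R @ [y]) ! n = z" "(R @ [y]) ! Suc n = y"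
    using A r b n1 by auto
  then show ?thesis unfolding opposite_edges_def using A
    by (intro exI[of _ "R @ [y]"]) simp
qed

lemma part1:
  assumes e1: "e1 \<in> graph_edges adj" and e2: "e2 \<in> graph_edges adj"
  shows "\<exists>e\<in>graph_edges adj. opposite_edges V adj opp n e1 e \<and> opposite_edges V adj opp n e2 e"
proof -
  obtain col :: "'a \<Rightarrow> bool" where col: "\<forall>x y. adj x y \<longrightarrow> col x \<noteq> col y" using bip by blast
  obtain a1 b1 where ab1: "e1 = {a1, b1}" "adj a1 b1" using e1 by (auto simp: graph_edges_def)
  obtain a2 b2 where ab2: "e2 = {a2, b2}" "adj a2 b2" using e2 by (auto simp: graph_edges_def)
  obtain u2 w2 where uw: "e2 = {u2, w2}" "adj u2 w2" "col u2 = col a1"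
  proof (cases "col a2 = col a1")
    case True then show ?thesis using that ab2 by blast
  next
    case False
    have "col a2 \<noteq> col b2" using col ab2(2) by blast
    then have "col b2 = col a1" using False by blast
    then show ?thesis using that[of b2 a2] ab2 adj_sym by (auto simp: insert_commute)
  qed
  obtain z R1 R2 where R: "sp V adj opp a1 z n R1" "sp V adj opp u2 z n R2"
    using CORE[OF col adj_V1[OF ab1(2)] adj_V1[OF uw(2)] uw(3)[symmetric]] by blast
  obtain R1' where R1': "sp V adj opp a1 z n R1'" "R1' ! 1 = b1" using FACT1[OF R(1) ab1(2)] by blast
  obtain R2' where R2': "sp V adj opp u2 z n R2'" "R2' ! 1 = w2" using FACT1[OF R(2) uw(2)] by blast
  have zV: "z \<in> V" using sp_V[OF R(1)] .
  have n1: "1 \<le> n" using n2 by simp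
  have n1': "n - 1 = n - 1" ..
  have a1: "adj z (R1' ! (n - 1))" using sp_pred_adj[OF R1'(1) n1] .
  have a2: "adj z (R2' ! (n - 1))" using sp_pred_adj[OF R2'(1) n1] .
  obtain y where y: "adj z y" "opp z (R1' ! (n - 1)) y" "opp z (R2' ! (n - 1)) y"
    using plump_pair[OF zV a1 a2] by blast
  have "{z, y} \<in> graph_edges adj" using y(1) by (auto simp: graph_edges_def)
  moreover have "opposite_edges V adj opp n e1 {z, y}" using edge_opp[OF R1' y(1,2)] ab1 by simp
  moreover have "opposite_edges V adj opp n e2 {z, y}" using edge_opp[OF R2' y(1,3)] uw by simp
  ultimately show ?thesis by blast
qed

lemma gdist_col:
  fixes col :: "'a \<Rightarrow> bool"
  assumes col: "\<forall>x y. adj x y \<longrightarrow> col x \<noteq> col y" and uv: "u \<in> V" "v \<in> V"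
    and ev: "even (gdist V adj u v)"
  shows "col u = col v"
proof -
  obtain xs where xs: "walk V adj xs" "hd xs = u" "last xs = v" using conn uv unfolding connected_graph_def by blast
  have ne: "xs \<noteq> []" using xs by (simp add: walk_def)
  have "\<exists>k xs. walk V adj xs \<and> length xs = Suc k \<and> hd xs = u \<and> last xs = v"
    using xs ne by (intro exI[of _ "length xs - 1"] exI[of _ xs]) simp
  then have "\<exists>xs. walk V adj xs \<and> length xs = Suc (gdist V adj u v) \<and> hd xs = u \<and> last xs = v"
    unfolding gdist_def by (rule LeastI_ex)
  then obtain ys where ys: "walk V adj ys" "length ys = Suc (gdist V adj u v)" "hd ys = u" "last ys = v" by blast
  have ne': "ys \<noteq> []" using ys(2) by auto
  have "col (ys ! gdist V adj u v) = (col (ys ! 0) = even (gdist V adj u v))"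
    using col_list[OF col, of ys "gdist V adj u v"] ys by (simp add: walk_def)
  moreover have "ys ! 0 = u" using ys(3) ne' by (simp add: hd_conv_nth)
  moreover have "ys ! gdist V adj u v = v" using ys(4) ys(2) ne' by (simp add: last_conv_nth)
  ultimately show ?thesis using ev by simp
qed

lemma part2:
  assumes uv: "u \<in> V" "v \<in> V" and ev: "even (gdist V adj u v)"
  shows "op_set V adj opp n u \<inter> op_set V adj opp n v \<noteq> {}"
proof -
  obtain col :: "'a \<Rightarrow> bool" where col: "\<forall>x y. adj x y \<longrightarrow> col x \<noteq> col y" using bip by blast
  obtain z R1 R2 where R: "sp V adj opp u z n R1" "sp V adj opp v z n R2"
    using CORE[OF col uv gdist_col[OF col uv ev]] by blast
  have "z \<in> op_set V adj opp n u"
  proof -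
    have "is_path V adj R1 n" "straight opp R1" "R1 ! 0 = u" "R1 ! n = z" using R(1) by (auto simp: sp_def)
    moreover then have "hd R1 = u" "last R1 = z" using hd_nth last_nth by metis+
    ultimately show ?thesis unfolding op_set_def root_def by blast
  qed
  moreover have "z \<in> op_set V adj opp n v"
  proof -
    have "is_path V adj R2 n" "straight opp R2" "R2 ! 0 = v" "R2 ! n = z" using R(2) by (auto simp: sp_def)
    moreover then have "hd R2 = v" "last R2 = z" using hd_nth last_nth by metis+
    ultimately show ?thesis unfolding op_set_def root_def by blast
  qed
  ultimately show ?thesis by blast
qed

end

theorem proposition2p12:
  fixes V :: "'a set" and adj :: "'a \<Rightarrow> 'a \<Rightarrow> bool" and opp :: "'a \<Rightarrow> 'a \<Rightarrow> 'a \<Rightarrow> bool" and n :: nat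
  assumes "veldkamp_ngon V adj opp n" and "2 \<le> n"
  shows "(\<forall>e1\<in>graph_edges adj. \<forall>e2\<in>graph_edges adj. \<exists>e\<in>graph_edges adj.
            opposite_edges V adj opp n e1 e \<and> opposite_edges V adj opp n e2 e)
       \<and> (\<forall>u\<in>V. \<forall>v\<in>V. even (gdist V adj u v) \<longrightarrow> op_set V adj opp n u \<inter> op_set V adj opp n v \<noteq> {})"
proof -
  interpret vk V adj opp n by unfold_locales (rule assms(1))
  show ?thesis using part1 part2 by blast
qed

end
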